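(* Let $c>0$. For each $N\in\mathbb{N}$, let $\mathcal{H}_N$ be a Hilbert space of dimension $N$, and let $\mu_N$ be an $\mathcal{L}_+(\mathcal{H}_N)$-valued measure on $\mathbb{D}$ such that $\|\mu_N\|_{\mathcal{I}}=1$ and \[ \|\mathcal{P}\|_{H^2(\mathbb{T},\mathcal{H}_N)\to L^2(\mathbb{D},\mathcal{H}_N,d\mu_N)}\ge c(\log N)^{1/2}. \] Let $\mathcal{H}=\bigoplus_{N=1}^\infty\mathcal{H}_N$ and $\mu=\bigoplus_{N=1}^\infty\mu_N$ (the $\mathcal{L}_+(\mathcal{H})$-valued measure acting blockwise). Then $\|\mu\|_{\mathcal{I}}=1$, while $\mathcal{P}:H^2(\mathbb{T},\mathcal{H})\to L^2(\mathbb{D},\mathcal{H},d\mu)$ is unbounded.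
   Context: $\mathbb{D}$ is the open unit disc, $\mathbb{T}$ the unit circle. For a separable Hilbert space $\mathcal{H}$, $\mathcal{L}_+(\mathcal{H})$ is the set of positive bounded operators on $\mathcal{H}$. For an $\mathcal{L}_+(\mathcal{H})$-valued measure $\mu$ on $\mathbb{D}$, $L^2(\mathbb{D},\mathcal{H},d\mu)$ is the space of strongly measurable $f:\mathbb{D}\to\mathcal{H}$ with $\int_{\mathbb{D}}\langle d\mu\,f,f\rangle_{\mathcal{H}}<\infty$. $H^2(\mathbb{T},\mathcal{H})$ is the subspace of analytic functions in $L^2(\mathbb{T},\mathcal{H})$. For an arc $I\subset\mathbb{T}$ with normalized length $|I|$ ($|\mathbb{T}|=1$), $Q_I=\{w\in\mathbb{D}: w/|w|\in I,\ 1-|I|<|w|<1\}$, and $\|\mu\|_{\mathcal{I}}=\sup_{I\subset\mathbb{T},\ \|e\|_{\mathcal{H}}=1}\langle\mu(Q_I)e,e\rangle_{\mathcal{H}}$. The harmonic extension operator is $\mathcal{P}f(re^{2\pi ix})=\int_0^1 f(e^{2\pi it})P_r(x-t)\,dt$ with $P_r(t)=\frac{1-r^2}{1-2r\cos(2\pi t)+r^2}$. *)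

theory Defs
  imports "HOL-Analysis.Analysis"
begin

text \<open>Hilbert spaces are modelled as l2(J) for a countable index set J:
  vectors are functions J -> complex vanishing off J.  Operators are given
  by their matrices w.r.t. the canonical basis.\<close>

definition Dmeas :: "complex measure" where
  "Dmeas = restrict_space borel (ball 0 1)"

definition l2vec :: "'j set \<Rightarrow> ('j \<Rightarrow> complex) \<Rightarrow> bool" where
  "l2vec J x \<longleftrightarrow> (\<forall>j. j \<notin> J \<longrightarrow> x j = 0) \<and> (\<lambda>j. (cmod (x j))\<^sup>2) summable_on J"

definition l2normsq :: "'j set \<Rightarrow> ('j \<Rightarrow> complex) \<Rightarrow> real" where
  "l2normsq J x = (\<Sum>\<^sub>\<infinity>j\<in>J. (cmod (x j))\<^sup>2)"

definition qf_fin :: "('j \<Rightarrow> 'j \<Rightarrow> complex) \<Rightarrow> ('j \<Rightarrow> complex) \<Rightarrow> 'j set \<Rightarrow> complex" where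
  "qf_fin W x F = (\<Sum>i\<in>F. \<Sum>j\<in>F. cnj (x i) * W i j * x j)"

definition psd_mat :: "'j set \<Rightarrow> ('j \<Rightarrow> 'j \<Rightarrow> complex) \<Rightarrow> bool" where
  "psd_mat J W \<longleftrightarrow> (\<forall>i j. (i \<notin> J \<or> j \<notin> J) \<longrightarrow> W i j = 0) \<and>
     (\<forall>x F. finite F \<and> F \<subseteq> J \<longrightarrow> qf_fin W x F \<in> \<real> \<and> 0 \<le> Re (qf_fin W x F))"

definition bounded_psd :: "'j set \<Rightarrow> ('j \<Rightarrow> 'j \<Rightarrow> complex) \<Rightarrow> bool" where
  "bounded_psd J W \<longleftrightarrow> psd_mat J W \<and>
     (\<exists>C. \<forall>x F. finite F \<and> F \<subseteq> J \<longrightarrow> Re (qf_fin W x F) \<le> C * (\<Sum>j\<in>F. (cmod (x j))\<^sup>2))"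

text \<open>The quadratic form <W x, x> for x in l2(J) (limit over finite coordinate sets;
  taken as a liminf in [0,\<infinity>] so that it is always defined).\<close>
definition qform :: "'j set \<Rightarrow> ('j \<Rightarrow> 'j \<Rightarrow> complex) \<Rightarrow> ('j \<Rightarrow> complex) \<Rightarrow> ennreal" where
  "qform J W x = Liminf (finite_subsets_at_top J) (\<lambda>F. ennreal (Re (qf_fin W x F)))"

text \<open>An L_+(l2(J))-valued measure on the Borel sets of the unit disc
  (values are bounded positive operators; weakly countably additive).\<close>
definition is_opmeasure :: "'j set \<Rightarrow> (complex set \<Rightarrow> 'j \<Rightarrow> 'j \<Rightarrow> complex) \<Rightarrow> bool" where
  "is_opmeasure J M \<longleftrightarrow> (\<forall>A\<in>sets Dmeas. bounded_psd J (M A)) \<and>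
     (\<forall>x F. finite F \<and> F \<subseteq> J \<longrightarrow>
        countably_additive (sets Dmeas) (\<lambda>A. ennreal (Re (qf_fin (M A) x F))))"

definition opdensity :: "'j set \<Rightarrow> (complex set \<Rightarrow> 'j \<Rightarrow> 'j \<Rightarrow> complex)
     \<Rightarrow> complex measure \<Rightarrow> (complex \<Rightarrow> 'j \<Rightarrow> 'j \<Rightarrow> complex) \<Rightarrow> bool" where
  "opdensity J M \<nu> W \<longleftrightarrow> sets \<nu> = sets Dmeas \<and> finite_measure \<nu> \<and>
     (\<forall>z\<in>space \<nu>. psd_mat J (W z)) \<and>
     (\<forall>i j. integrable \<nu> (\<lambda>z. W z i j)) \<and>
     (\<forall>A\<in>sets Dmeas. \<forall>i j. M A i j = (LINT z:A|\<nu>. W z i j))"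

text \<open>\<integral> <d\<mu> g, g> for g : D -> l2(J) (coordinatewise measurable = strongly
  measurable, J countable).  Defined through a density representation.\<close>
definition opL2 :: "'j set \<Rightarrow> (complex set \<Rightarrow> 'j \<Rightarrow> 'j \<Rightarrow> complex)
     \<Rightarrow> (complex \<Rightarrow> 'j \<Rightarrow> complex) \<Rightarrow> ennreal" where
  "opL2 J M g = (THE q. \<forall>\<nu> W. opdensity J M \<nu> W \<longrightarrow>
       q = (\<integral>\<^sup>+ z. qform J (W z) (g z) \<partial>\<nu>))"

text \<open>H^2(T, l2(J)); a function on T is written as t \<mapsto> f(e^{2\<pi> i t}), t \<in> [0,1].\<close>
definition H2 :: "'j set \<Rightarrow> (real \<Rightarrow> 'j \<Rightarrow> complex) \<Rightarrow> bool" where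
  "H2 J f \<longleftrightarrow> (\<forall>j. (\<lambda>t. f t j) \<in> borel_measurable (restrict_space lborel {0..1})) \<and>
     (\<forall>t j. j \<notin> J \<longrightarrow> f t j = 0) \<and>
     (\<integral>\<^sup>+ t. (\<Sum>\<^sub>\<infinity>j\<in>J. ennreal ((cmod (f t j))\<^sup>2)) \<partial>(restrict_space lborel {0..1})) < \<infinity> \<and>
     (\<forall>n::int. n < 0 \<longrightarrow> (\<forall>j.
        (LINT t:{0..1}|lborel. f t j * exp (- 2 * pi * \<i> * of_int n * of_real t)) = 0))"

definition H2normsq :: "'j set \<Rightarrow> (real \<Rightarrow> 'j \<Rightarrow> complex) \<Rightarrow> ennreal" where
  "H2normsq J f = (\<integral>\<^sup>+ t. (\<Sum>\<^sub>\<infinity>j\<in>J. ennreal ((cmod (f t j))\<^sup>2)) \<partial>(restrict_space lborel {0..1}))"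

definition Pker :: "real \<Rightarrow> real \<Rightarrow> real" where
  "Pker r t = (1 - r\<^sup>2) / (1 - 2 * r * cos (2 * pi * t) + r\<^sup>2)"

text \<open>Harmonic extension: w = r e^{2\<pi> i x} with r = |w|, x = Arg w / (2\<pi>).\<close>
definition Pext :: "(real \<Rightarrow> 'j \<Rightarrow> complex) \<Rightarrow> complex \<Rightarrow> 'j \<Rightarrow> complex" where
  "Pext f w j = (LINT t:{0..1}|lborel. of_real (Pker (cmod w) (Arg w / (2 * pi) - t)) * f t j)"

text \<open>Arcs I of T: images t \<mapsto> e^{2\<pi> i t} of bounded nonempty intervals S of length \<le> 1;
  |I| = length of S.\<close>
definition arc_param :: "real set \<Rightarrow> bool" where
  "arc_param S \<longleftrightarrow> is_interval S \<and> S \<noteq> {} \<and> bdd_above S \<and> bdd_below S \<and> Sup S - Inf S \<le> 1"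

definition Qbox :: "real set \<Rightarrow> complex set" where
  "Qbox S = {w. cmod w < 1 \<and> 1 - (Sup S - Inf S) < cmod w \<and>
               (\<exists>s\<in>S. w / of_real (cmod w) = exp (2 * pi * \<i> * of_real s))}"

definition Inorm :: "'j set \<Rightarrow> (complex set \<Rightarrow> 'j \<Rightarrow> 'j \<Rightarrow> complex) \<Rightarrow> ennreal" where
  "Inorm J M = (SUP S \<in> Collect arc_param. SUP e \<in> {e. l2vec J e \<and> l2normsq J e = 1}.
                  qform J (M (Qbox S)) e)"

text \<open>Direct sum H = \<Oplus>_{N\<ge>1} C^N, indexed by pairs (N,i), i < N, and the
  blockwise direct sum of the measures.\<close>
definition Jsum :: "(nat \<times> nat) set" where
  "Jsum = {(N, i). 1 \<le> N \<and> i < N}"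

definition dsum_meas :: "(nat \<Rightarrow> complex set \<Rightarrow> nat \<Rightarrow> nat \<Rightarrow> complex)
     \<Rightarrow> complex set \<Rightarrow> nat \<times> nat \<Rightarrow> nat \<times> nat \<Rightarrow> complex" where
  "dsum_meas \<mu> A p q = (if p \<in> Jsum \<and> q \<in> Jsum \<and> fst p = fst q
                         then \<mu> (fst p) A (snd p) (snd q) else 0)"

end

theory Submission
  imports Defs
begin


lemma qf_fin_supp:
  assumes "finite F" "B \<subseteq> F" "\<And>p. p \<notin> B \<Longrightarrow> x p = 0"
  shows "qf_fin W x F = qf_fin W x B"
proof -
  have fB: "finite B" using assms finite_subset by blast
  have "qf_fin W x F = (\<Sum>i\<in>B. \<Sum>j\<in>F. cnj (x i) * W i j * x j)"
    unfolding qf_fin_def using assms by (intro sum.mono_neutral_right) auto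
  also have "\<dots> = (\<Sum>i\<in>B. \<Sum>j\<in>B. cnj (x i) * W i j * x j)"
    using assms fB by (intro sum.cong refl sum.mono_neutral_right) auto
  finally show ?thesis unfolding qf_fin_def .
qed

lemma qform_supp:
  assumes "finite B" "B \<subseteq> J" "\<And>p. p \<notin> B \<Longrightarrow> x p = 0"
  shows "qform J W x = ennreal (Re (qf_fin W x B))"
proof -
  have ev: "eventually (\<lambda>F. ennreal (Re (qf_fin W x F)) = ennreal (Re (qf_fin W x B))) (finite_subsets_at_top J)"
    unfolding eventually_finite_subsets_at_top using assms
    by (intro exI[of _ B]) (auto simp: qf_fin_supp)
  show ?thesis unfolding qform_def
    by (subst Liminf_eq[OF ev]) (simp add: Liminf_const)
qed

lemma block_bound:
  fixes N :: nat and M :: "complex set \<Rightarrow> nat \<Rightarrow> nat \<Rightarrow> complex"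
  assumes I: "Inorm {..<N} M = 1" and S: "arc_param S" and F: "finite F" "F \<subseteq> {..<N}"
  shows "Re (qf_fin (M (Qbox S)) x F) \<le> (\<Sum>i\<in>F. (cmod (x i))\<^sup>2)"
proof -
  define s where "s = (\<Sum>i\<in>F. (cmod (x i))\<^sup>2)"
  define W where "W = M (Qbox S)"
  show ?thesis
  proof (cases "s = 0")
    case True
    then have "\<forall>i\<in>F. x i = 0" unfolding s_def using F by (subst (asm) sum_nonneg_eq_0_iff) auto
    then have "qf_fin W x F = 0" unfolding qf_fin_def by simp
    then show ?thesis using True unfolding s_def W_def by simp
  next
    case False
    have s0: "s > 0" using False unfolding s_def by (metis sum_nonneg zero_le_power2 order_le_less)
    define e where "e i = (if i \<in> F then x i / of_real (sqrt s) else 0)" for i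
    have l2: "l2vec {..<N} e" unfolding l2vec_def using F by (auto simp: e_def intro!: summable_on_finite)
    have "l2normsq {..<N} e = (\<Sum>i\<in>{..<N}. (cmod (e i))\<^sup>2)" unfolding l2normsq_def by simp
    also have "\<dots> = (\<Sum>i\<in>F. (cmod (e i))\<^sup>2)"
      using F by (intro sum.mono_neutral_right) (auto simp: e_def)
    also have "\<dots> = (\<Sum>i\<in>F. (cmod (x i))\<^sup>2 / s)"
      using s0 by (intro sum.cong refl) (simp add: e_def norm_divide power_divide)
    also have "\<dots> = 1" using s0 unfolding s_def by (simp add: sum_divide_distrib[symmetric])
    finally have n1: "l2normsq {..<N} e = 1" .
    have "qform {..<N} W e \<le> Inorm {..<N} M"
      unfolding Inorm_def W_def using S l2 n1
      by (intro SUP_upper2[of S] SUP_upper) auto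
    also have "qform {..<N} W e = ennreal (Re (qf_fin W e F))"
      using F by (intro qform_supp) (auto simp: e_def)
    finally have le1: "Re (qf_fin W e F) \<le> 1" using I
      by (metis ennreal_le_1)
    have sq: "complex_of_real (sqrt s) * complex_of_real (sqrt s) = complex_of_real s"
      using s0 by (simp flip: of_real_mult)
    have "qf_fin W e F = qf_fin W x F / of_real s"
      unfolding qf_fin_def sum_divide_distrib
      using s0 sq by (intro sum.cong refl) (auto simp: e_def field_simps)
    then have "Re (qf_fin W e F) = Re (qf_fin W x F) / s" by (simp add: Re_divide_of_real)
    with le1 s0 show ?thesis unfolding s_def[symmetric] W_def[symmetric] by (simp add: divide_le_eq)
  qed
qed

lemma Sigma_decomp: "F = (SIGMA N:fst ` F. {i. (N, i) \<in> F})"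
  by force

lemma finite_G: "finite F \<Longrightarrow> finite {i. (N, i) \<in> F}"
  by (rule finite_subset[of _ "snd ` F"]) force+

lemma sum_blocks:
  assumes "finite F"
  shows "(\<Sum>p\<in>F. h p) = (\<Sum>N\<in>fst ` F. \<Sum>i\<in>{i. (N, i) \<in> F}. h (N, i))"
proof -
  have "(\<Sum>p\<in>F. h p) = (\<Sum>p\<in>(SIGMA N:fst ` F. {i. (N, i) \<in> F}). h p)"
    by (rule arg_cong[where f="sum h"], rule Sigma_decomp)
  also have "\<dots> = (\<Sum>N\<in>fst ` F. \<Sum>i\<in>{i. (N, i) \<in> F}. h (N, i))"
    using sum.Sigma[of "fst ` F" "\<lambda>N. {i. (N,i)\<in>F}" "\<lambda>N i. h (N,i)"] assms finite_G[OF assms]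
    by simp
  finally show ?thesis .
qed

lemma qf_dsum:
  fixes \<mu> :: "nat \<Rightarrow> complex set \<Rightarrow> nat \<Rightarrow> nat \<Rightarrow> complex"
  assumes F: "finite F" "F \<subseteq> Jsum"
  shows "qf_fin (dsum_meas \<mu> A) e F =
    (\<Sum>N\<in>fst ` F. qf_fin (\<mu> N A) (\<lambda>i. e (N, i)) {i. (N, i) \<in> F})"
proof -
  let ?G = "\<lambda>N. {i. (N, i) \<in> F}"
  have ff: "finite (fst ` F)" using F by simp
  have "qf_fin (dsum_meas \<mu> A) e F = (\<Sum>p\<in>F. \<Sum>q\<in>F. cnj (e p) * dsum_meas \<mu> A p q * e q)"
    unfolding qf_fin_def ..
  also have "\<dots> = (\<Sum>N\<in>fst ` F. \<Sum>i\<in>?G N. \<Sum>M\<in>fst ` F. \<Sum>j\<in>?G M.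
       cnj (e (N,i)) * dsum_meas \<mu> A (N,i) (M,j) * e (M,j))"
    by (simp only: sum_blocks[OF F(1)])
  also have "\<dots> = (\<Sum>N\<in>fst ` F. \<Sum>i\<in>?G N. \<Sum>M\<in>fst ` F.
       (if M = N then (\<Sum>j\<in>?G N. cnj (e (N,i)) * \<mu> N A i j * e (N,j)) else 0))"
  proof (intro sum.cong refl)
    fix N i M assume "N \<in> fst ` F" "i \<in> ?G N" "M \<in> fst ` F"
    have "\<And>j. j \<in> ?G M \<Longrightarrow> dsum_meas \<mu> A (N,i) (M,j) = (if M = N then \<mu> N A i j else 0)"
      using F \<open>i \<in> ?G N\<close> unfolding dsum_meas_def by auto
    then show "(\<Sum>j\<in>?G M. cnj (e (N,i)) * dsum_meas \<mu> A (N,i) (M,j) * e (M,j)) =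
      (if M = N then (\<Sum>j\<in>?G N. cnj (e (N,i)) * \<mu> N A i j * e (N,j)) else 0)"
      by (cases "M = N") simp_all
  qed
  also have "\<dots> = (\<Sum>N\<in>fst ` F. qf_fin (\<mu> N A) (\<lambda>i. e (N, i)) (?G N))"
    unfolding qf_fin_def
  proof (rule sum.cong[OF refl])
    fix N assume "N \<in> fst ` F"
    then show "(\<Sum>i\<in>?G N. \<Sum>M\<in>fst ` F.
       (if M = N then (\<Sum>j\<in>?G N. cnj (e (N,i)) * \<mu> N A i j * e (N,j)) else 0)) =
      (\<Sum>i\<in>?G N. \<Sum>j\<in>?G N. cnj (e (N,i)) * \<mu> N A i j * e (N,j))"
      using ff by (simp add: sum.delta)
  qed
  finally show ?thesis .
qed

lemma Jsum_block: "p \<in> Jsum \<longleftrightarrow> fst p \<ge> 1 \<and> snd p < fst p"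
  by (cases p) (auto simp: Jsum_def)

lemma part1:
  fixes \<mu> :: "nat \<Rightarrow> complex set \<Rightarrow> nat \<Rightarrow> nat \<Rightarrow> complex"
  assumes I: "\<And>N. N \<ge> 1 \<Longrightarrow> Inorm {..<N} (\<mu> N) = 1"
  shows "Inorm Jsum (dsum_meas \<mu>) = 1"
proof (rule antisym)
  show "Inorm Jsum (dsum_meas \<mu>) \<le> 1"
    unfolding Inorm_def
  proof (intro SUP_least)
    fix S e assume S: "S \<in> Collect arc_param" and e: "e \<in> {e. l2vec Jsum e \<and> l2normsq Jsum e = 1}"
    let ?W = "dsum_meas \<mu> (Qbox S)"
    have "eventually (\<lambda>F. ennreal (Re (qf_fin ?W e F)) \<le> 1) (finite_subsets_at_top Jsum)"
    proof (intro eventually_finite_subsets_at_top_weakI)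
      fix F assume F: "finite F" "F \<subseteq> Jsum"
      let ?G = "\<lambda>N. {i. (N, i) \<in> F}"
      have "Re (qf_fin ?W e F) = (\<Sum>N\<in>fst ` F. Re (qf_fin (\<mu> N (Qbox S)) (\<lambda>i. e (N, i)) (?G N)))"
        using qf_dsum[OF F] by simp
      also have "\<dots> \<le> (\<Sum>N\<in>fst ` F. \<Sum>i\<in>?G N. (cmod (e (N, i)))\<^sup>2)"
      proof (intro sum_mono)
        fix N assume N: "N \<in> fst ` F"
        then have N1: "N \<ge> 1" using F by (auto simp: Jsum_def)
        have "?G N \<subseteq> {..<N}" using F by (auto simp: Jsum_def)
        then show "Re (qf_fin (\<mu> N (Qbox S)) (\<lambda>i. e (N, i)) (?G N)) \<le> (\<Sum>i\<in>?G N. (cmod (e (N, i)))\<^sup>2)"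
          using block_bound[OF I[OF N1], of S "?G N" "\<lambda>i. e (N,i)"] S finite_G[OF F(1), of N] by auto
      qed
      also have "\<dots> = (\<Sum>p\<in>F. (cmod (e p))\<^sup>2)"
        by (rule sum_blocks[symmetric, OF F(1)])
      also have "\<dots> \<le> l2normsq Jsum e"
        unfolding l2normsq_def using e F by (intro finite_sum_le_infsum) (auto simp: l2vec_def)
      finally show "ennreal (Re (qf_fin ?W e F)) \<le> 1" using e by simp
    qed
    then have "Limsup (finite_subsets_at_top Jsum) (\<lambda>F. ennreal (Re (qf_fin ?W e F))) \<le> 1"
      by (rule Limsup_bounded)
    then show "qform Jsum ?W e \<le> 1"
      unfolding qform_def using Liminf_le_Limsup[of "finite_subsets_at_top Jsum"] order_trans by fastforce
  qed
next
  have key: "\<exists>E\<in>{e. l2vec Jsum e \<and> l2normsq Jsum e = 1}.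
     qform {..<1} (\<mu> 1 (Qbox S)) e \<le> qform Jsum (dsum_meas \<mu> (Qbox S)) E"
    if l2: "l2vec {..<1} e" and n1: "l2normsq {..<1} e = 1" for S and e :: "nat \<Rightarrow> complex"
  proof -
      have e0: "\<And>i. i \<noteq> 0 \<Longrightarrow> e i = 0" using l2 unfolding l2vec_def by auto
      define E where "E p = (if p = (1::nat, 0::nat) then e 0 else 0)" for p
      have J1: "(1::nat, 0::nat) \<in> Jsum" by (simp add: Jsum_def)
      have "l2vec Jsum E"
        unfolding l2vec_def
      proof
        show "\<forall>j. j \<notin> Jsum \<longrightarrow> E j = 0" using J1 by (auto simp: E_def)
        have "(\<lambda>j. (cmod (E j))\<^sup>2) summable_on {(1,0)}" by simp
        then show "(\<lambda>j. (cmod (E j))\<^sup>2) summable_on Jsum"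
          by (subst summable_on_cong_neutral[where T="{(1,0)}" and g="\<lambda>j. (cmod (E j))\<^sup>2"]) (use J1 in \<open>auto simp: E_def\<close>)
      qed
      moreover have "l2normsq Jsum E = 1"
      proof -
        have "l2normsq Jsum E = (\<Sum>\<^sub>\<infinity>j\<in>{(1,0)}. (cmod (E j))\<^sup>2)"
          unfolding l2normsq_def by (rule infsum_cong_neutral) (use J1 in \<open>auto simp: E_def\<close>)
        also have "\<dots> = (cmod (e 0))\<^sup>2" by (simp add: E_def)
        also have "\<dots> = l2normsq {..<1} e" unfolding l2normsq_def by simp
        finally show ?thesis using n1 by simp
      qed
      moreover have "qform {..<1} (\<mu> 1 (Qbox S)) e = qform Jsum (dsum_meas \<mu> (Qbox S)) E"
      proof -
        have "qform {..<1} (\<mu> 1 (Qbox S)) e = ennreal (Re (qf_fin (\<mu> 1 (Qbox S)) e {0}))"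
          using e0 by (intro qform_supp) auto
        moreover have "qform Jsum (dsum_meas \<mu> (Qbox S)) E = ennreal (Re (qf_fin (dsum_meas \<mu> (Qbox S)) E {(1,0)}))"
          using J1 by (intro qform_supp) (auto simp: E_def)
        ultimately show ?thesis using J1 by (simp add: qf_fin_def E_def dsum_meas_def)
      qed
      ultimately show ?thesis by (intro bexI[of _ E]) auto
  qed
  have "Inorm {..<1} (\<mu> 1) \<le> Inorm Jsum (dsum_meas \<mu>)"
    unfolding Inorm_def
  proof (rule SUP_subset_mono[OF subset_refl])
    fix S assume "S \<in> Collect arc_param"
    show "(SUP e\<in>{e. l2vec {..<1} e \<and> l2normsq {..<1} e = 1}. qform {..<1} (\<mu> 1 (Qbox S)) e)
         \<le> (SUP e\<in>{e. l2vec Jsum e \<and> l2normsq Jsum e = 1}. qform Jsum (dsum_meas \<mu> (Qbox S)) e)"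
    proof (rule SUP_least)
      fix e :: "nat \<Rightarrow> complex" assume "e \<in> {e. l2vec {..<1} e \<and> l2normsq {..<1} e = 1}"
      then obtain E where "E\<in>{e. l2vec Jsum e \<and> l2normsq Jsum e = 1}"
        "qform {..<1} (\<mu> 1 (Qbox S)) e \<le> qform Jsum (dsum_meas \<mu> (Qbox S)) E"
        using key by blast
      then show "qform {..<1} (\<mu> 1 (Qbox S)) e \<le> (SUP e\<in>{e. l2vec Jsum e \<and> l2normsq Jsum e = 1}. qform Jsum (dsum_meas \<mu> (Qbox S)) e)"
        by (intro SUP_upper2) auto
    qed
  qed
  then show "1 \<le> Inorm Jsum (dsum_meas \<mu>)" using I[of 1] by simp
qed



lemma set_integral_density_real:
  fixes f :: "'a \<Rightarrow> complex"
  assumes [measurable]: "g \<in> borel_measurable L" "f \<in> borel_measurable L" "A \<in> sets L"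
    and nn: "\<And>x. 0 \<le> g x"
  shows "(LINT z:A|density L (\<lambda>x. ennreal (g x)). f z) = (LINT z:A|L. g z *\<^sub>R f z)"
  unfolding set_lebesgue_integral_def
  by (subst integral_density) (auto simp: nn intro!: Bochner_Integration.integral_cong)

lemma dens_rep:
  assumes fin: "finite_measure L" and N: "finite_measure N" "sets N = sets L" "absolutely_continuous L N"
  obtains D where "D \<in> borel_measurable L" "\<And>x. 0 \<le> D x" "N = density L (\<lambda>x. ennreal (D x))"
proof -
  interpret finite_measure L by fact
  obtain D where D: "D \<in> borel_measurable L" "AE x in L. RN_deriv L N x = ennreal (D x)" "\<And>x. 0 \<le> D x"
    using real_RN_deriv[OF N(1) N(3) N(2)] by metis
  have "N = density L (RN_deriv L N)" using density_RN_deriv N by simp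
  also have "\<dots> = density L (\<lambda>x. ennreal (D x))"
    by (rule density_cong) (use D in auto)
  finally show thesis using that D by blast
qed

lemma qf_cong:
  assumes "\<And>p q. p \<in> B \<Longrightarrow> q \<in> B \<Longrightarrow> W p q = W' p q"
  shows "qf_fin W x B = qf_fin W' x B"
  unfolding qf_fin_def using assms by (intro sum.cong refl) auto

lemma qf_scale: "qf_fin (\<lambda>p q. complex_of_real c * W p q) x B = complex_of_real c * qf_fin W x B"
  unfolding qf_fin_def by (simp add: sum_distrib_left algebra_simps)

lemma qf_meas:
  assumes W: "\<And>p q. (\<lambda>z. W z p q) \<in> borel_measurable L"
    and g: "\<And>p. (\<lambda>z. g z p) \<in> borel_measurable L"
  shows "(\<lambda>z. ennreal (Re (qf_fin (W z) (g z) B))) \<in> borel_measurable L"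
proof -
  have c: "(\<lambda>x. cnj x) \<in> borel_measurable borel"
    by (intro borel_measurable_continuous_onI continuous_intros)
  have t: "(\<lambda>z. cnj (g z i) * W z i j * g z j) \<in> borel_measurable L" for i j
    by (intro borel_measurable_times measurable_compose[OF g c] W g)
  have "(\<lambda>z. \<Sum>i\<in>B. \<Sum>j\<in>B. cnj (g z i) * W z i j * g z j) \<in> borel_measurable L"
    by (intro borel_measurable_sum t)
  then have "(\<lambda>z. Re (qf_fin (W z) (g z) B)) \<in> borel_measurable L"
    unfolding qf_fin_def by measurable
  then show ?thesis by measurable
qed

lemma dens_int_eq:
  assumes d1: "opdensity J M \<nu>1 W1" and d2: "opdensity J M \<nu>2 W2"
    and B: "finite B" and g: "\<And>p. (\<lambda>z. g z p) \<in> borel_measurable Dmeas"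
  shows "(\<integral>\<^sup>+z. ennreal (Re (qf_fin (W1 z) (g z) B)) \<partial>\<nu>1) = (\<integral>\<^sup>+z. ennreal (Re (qf_fin (W2 z) (g z) B)) \<partial>\<nu>2)"
proof -
  have s1: "sets \<nu>1 = sets Dmeas" and s2: "sets \<nu>2 = sets Dmeas"
    and f1: "finite_measure \<nu>1" and f2: "finite_measure \<nu>2"
    and i1: "\<And>i j. integrable \<nu>1 (\<lambda>z. W1 z i j)" and i2: "\<And>i j. integrable \<nu>2 (\<lambda>z. W2 z i j)"
    and m1: "\<And>A i j. A \<in> sets Dmeas \<Longrightarrow> M A i j = (LINT z:A|\<nu>1. W1 z i j)"
    and m2: "\<And>A i j. A \<in> sets Dmeas \<Longrightarrow> M A i j = (LINT z:A|\<nu>2. W2 z i j)"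
    using d1 d2 unfolding opdensity_def by auto
  define L where "L = sup_measure' \<nu>1 \<nu>2"
  have s21: "sets \<nu>2 = sets \<nu>1" using s1 s2 by simp
  have sL: "sets L = sets Dmeas" unfolding L_def using s21 s1 by simp
  have sp1: "space \<nu>1 = space L" and sp2: "space \<nu>2 = space L"
    using sL s1 s2 sets_eq_imp_space_eq by metis+
  have le1: "\<And>X. X \<in> sets Dmeas \<Longrightarrow> emeasure \<nu>1 X \<le> emeasure L X"
    unfolding L_def using s21 s1 by (intro le_emeasure_sup_measure'1) auto
  have le2: "\<And>X. X \<in> sets Dmeas \<Longrightarrow> emeasure \<nu>2 X \<le> emeasure L X"
    unfolding L_def using s21 s1 by (intro le_emeasure_sup_measure'2) auto
  have finL: "finite_measure L"
  proof
    have spc: "space L \<in> sets \<nu>1" using sL s1 sets.top[of L] by simp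
    have "emeasure L (space L) = (SUP Y\<in>sets \<nu>1. emeasure \<nu>1 (space L \<inter> Y) + emeasure \<nu>2 (space L \<inter> - Y))"
      unfolding L_def using s21 spc by (intro emeasure_sup_measure') (auto simp: L_def[symmetric])
    also have "\<dots> \<le> emeasure \<nu>1 (space L) + emeasure \<nu>2 (space L)"
      using spc s21 by (intro SUP_least add_mono emeasure_mono) auto
    also have "\<dots> < \<infinity>"
      using finite_measure.emeasure_finite[OF f1, of "space L"] finite_measure.emeasure_finite[OF f2, of "space L"]
      by (simp add: ennreal_add_eq_top top.not_eq_extremum)
    finally show "emeasure L (space L) \<noteq> \<infinity>" by simp
  qed
  have ac1: "absolutely_continuous L \<nu>1" unfolding absolutely_continuous_def
  proof
    fix X assume "X \<in> null_sets L"
    then have X: "X \<in> sets Dmeas" "emeasure L X = 0" using sL by (auto simp: null_sets_def)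
    then show "X \<in> null_sets \<nu>1" using le1[OF X(1)] s1 by (auto simp: null_sets_def)
  qed
  have ac2: "absolutely_continuous L \<nu>2" unfolding absolutely_continuous_def
  proof
    fix X assume "X \<in> null_sets L"
    then have X: "X \<in> sets Dmeas" "emeasure L X = 0" using sL by (auto simp: null_sets_def)
    then show "X \<in> null_sets \<nu>2" using le2[OF X(1)] s2 by (auto simp: null_sets_def)
  qed
  interpret L: finite_measure L by (rule finL)
  obtain D1 where D1[measurable]: "D1 \<in> borel_measurable L" and D1p: "\<And>x. 0 \<le> D1 x"
    and nu1: "\<nu>1 = density L (\<lambda>x. ennreal (D1 x))"
    using dens_rep[OF finL f1 _ ac1] s1 sL by metis
  obtain D2 where D2[measurable]: "D2 \<in> borel_measurable L" and D2p: "\<And>x. 0 \<le> D2 x"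
    and nu2: "\<nu>2 = density L (\<lambda>x. ennreal (D2 x))"
    using dens_rep[OF finL f2 _ ac2] s2 sL by metis
  have mc: "\<And>N. measurable L N = measurable Dmeas N" using sL by (intro measurable_cong_sets) auto
  have mc1: "\<And>N. measurable \<nu>1 N = measurable Dmeas N" using s1 by (intro measurable_cong_sets) auto
  have mc2: "\<And>N. measurable \<nu>2 N = measurable Dmeas N" using s2 by (intro measurable_cong_sets) auto
  have W1m[measurable]: "\<And>p q. (\<lambda>z. W1 z p q) \<in> borel_measurable L"
    using i1 borel_measurable_integrable mc mc1 by metis
  have W2m[measurable]: "\<And>p q. (\<lambda>z. W2 z p q) \<in> borel_measurable L"
    using i2 borel_measurable_integrable mc mc2 by metis
  have gm[measurable]: "\<And>p. (\<lambda>z. g z p) \<in> borel_measurable L" using g mc by metis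
  have AEpq: "AE z in L. complex_of_real (D1 z) * W1 z p q = complex_of_real (D2 z) * W2 z p q" for p q
  proof -
    have int1: "integrable L (\<lambda>z. D1 z *\<^sub>R W1 z p q)"
      using i1[of p q] unfolding nu1 by (subst (asm) integrable_density) (auto simp: D1p)
    have int2: "integrable L (\<lambda>z. D2 z *\<^sub>R W2 z p q)"
      using i2[of p q] unfolding nu2 by (subst (asm) integrable_density) (auto simp: D2p)
    have "AE z in L. D1 z *\<^sub>R W1 z p q = D2 z *\<^sub>R W2 z p q"
    proof (rule L.density_unique_banach[OF int1 int2])
      fix A assume A: "A \<in> sets L"
      have "(LINT z:A|L. D1 z *\<^sub>R W1 z p q) = (LINT z:A|\<nu>1. W1 z p q)"
        unfolding nu1 using A by (subst set_integral_density_real) (auto simp: D1p)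
      also have "\<dots> = M A p q" using m1 A sL by simp
      also have "\<dots> = (LINT z:A|\<nu>2. W2 z p q)" using m2 A sL by simp
      also have "\<dots> = (LINT z:A|L. D2 z *\<^sub>R W2 z p q)"
        unfolding nu2 using A by (subst set_integral_density_real) (auto simp: D2p)
      finally show "(LINT z:A|L. D1 z *\<^sub>R W1 z p q) = (LINT z:A|L. D2 z *\<^sub>R W2 z p q)" .
    qed
    then show ?thesis by (simp add: scaleR_conv_of_real)
  qed
  have AEall: "AE z in L. \<forall>p\<in>B. \<forall>q\<in>B. complex_of_real (D1 z) * W1 z p q = complex_of_real (D2 z) * W2 z p q"
    using B by (intro AE_finite_allI AEpq)
  have "(\<integral>\<^sup>+z. ennreal (Re (qf_fin (W1 z) (g z) B)) \<partial>\<nu>1) =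
        (\<integral>\<^sup>+z. ennreal (D1 z) * ennreal (Re (qf_fin (W1 z) (g z) B)) \<partial>L)"
    unfolding nu1 by (rule nn_integral_density) (auto intro!: qf_meas)
  also have "\<dots> = (\<integral>\<^sup>+z. ennreal (Re (qf_fin (\<lambda>p q. complex_of_real (D1 z) * W1 z p q) (g z) B)) \<partial>L)"
    by (intro nn_integral_cong) (simp add: qf_scale ennreal_mult' D1p)
  also have "\<dots> = (\<integral>\<^sup>+z. ennreal (Re (qf_fin (\<lambda>p q. complex_of_real (D2 z) * W2 z p q) (g z) B)) \<partial>L)"
    by (intro nn_integral_cong_AE, use AEall in eventually_elim) (auto intro!: arg_cong[where f="\<lambda>x. ennreal (Re x)"] qf_cong)
  also have "\<dots> = (\<integral>\<^sup>+z. ennreal (D2 z) * ennreal (Re (qf_fin (W2 z) (g z) B)) \<partial>L)"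
    by (intro nn_integral_cong) (simp add: qf_scale ennreal_mult' D2p)
  also have "\<dots> = (\<integral>\<^sup>+z. ennreal (Re (qf_fin (W2 z) (g z) B)) \<partial>\<nu>2)"
    unfolding nu2 by (rule nn_integral_density[symmetric]) (auto intro!: qf_meas)
  finally show ?thesis .
qed



lemma opL2_eq:
  assumes d: "opdensity J M \<nu> W" and B: "finite B" "B \<subseteq> J" and gz: "\<And>z p. p \<notin> B \<Longrightarrow> g z p = 0"
    and g: "\<And>p. (\<lambda>z. g z p) \<in> borel_measurable Dmeas"
  shows "opL2 J M g = (\<integral>\<^sup>+z. ennreal (Re (qf_fin (W z) (g z) B)) \<partial>\<nu>)"
proof -
  have qs: "\<And>W z. qform J W (g z) = ennreal (Re (qf_fin W (g z) B))"
    by (rule qform_supp[OF B]) (rule gz)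
  show ?thesis
    unfolding opL2_def qs
  proof (rule the_equality)
    show "\<forall>\<nu>' W'. opdensity J M \<nu>' W' \<longrightarrow> (\<integral>\<^sup>+z. ennreal (Re (qf_fin (W z) (g z) B)) \<partial>\<nu>) =
        (\<integral>\<^sup>+z. ennreal (Re (qf_fin (W' z) (g z) B)) \<partial>\<nu>')"
      using dens_int_eq[where g=g, OF d _ B(1) g] by blast
  next
    fix q assume "\<forall>\<nu>' W'. opdensity J M \<nu>' W' \<longrightarrow> q = (\<integral>\<^sup>+z. ennreal (Re (qf_fin (W' z) (g z) B)) \<partial>\<nu>')"
    then show "q = (\<integral>\<^sup>+z. ennreal (Re (qf_fin (W z) (g z) B)) \<partial>\<nu>)" using d by blast
  qed
qed

lemma opL2_nodens: "\<not> (\<exists>\<nu> W. opdensity J M \<nu> W) \<Longrightarrow> opL2 J M g = (THE q::ennreal. True)"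
  unfolding opL2_def by simp

lemma qf_cong2:
  assumes "\<And>p q. p \<in> B \<Longrightarrow> q \<in> B \<Longrightarrow> W p q = W' p q" "\<And>p. p \<in> B \<Longrightarrow> x p = x' p"
  shows "qf_fin W x B = qf_fin W' x' B"
  unfolding qf_fin_def using assms by (intro sum.cong refl) auto

lemma qf_reindex: "qf_fin W X (Pair N ` F) = qf_fin (\<lambda>i j. W (N,i) (N,j)) (\<lambda>i. X (N,i)) F"
  unfolding qf_fin_def by (simp add: sum.reindex inj_on_def)

lemma Pair_block: "N \<ge> 1 \<Longrightarrow> Pair N ` {..<N} \<subseteq> Jsum"
  by (auto simp: Jsum_def)

lemma block_density:
  fixes \<mu> :: "nat \<Rightarrow> complex set \<Rightarrow> nat \<Rightarrow> nat \<Rightarrow> complex"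
  assumes d: "opdensity Jsum (dsum_meas \<mu>) \<nu> W" and N: "N \<ge> 1" and om: "is_opmeasure {..<N} (\<mu> N)"
  shows "opdensity {..<N} (\<mu> N) \<nu> (\<lambda>z i j. if i < N \<and> j < N then W z (N,i) (N,j) else 0)"
proof -
  have d': "sets \<nu> = sets Dmeas" "finite_measure \<nu>" "\<And>z. z \<in> space \<nu> \<Longrightarrow> psd_mat Jsum (W z)"
    "\<And>i j. integrable \<nu> (\<lambda>z. W z i j)"
    "\<And>A i j. A \<in> sets Dmeas \<Longrightarrow> dsum_meas \<mu> A i j = (LINT z:A|\<nu>. W z i j)"
    using d unfolding opdensity_def by auto
  have psdN: "\<And>A. A \<in> sets Dmeas \<Longrightarrow> psd_mat {..<N} (\<mu> N A)"
    using om unfolding is_opmeasure_def bounded_psd_def by auto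
  show ?thesis unfolding opdensity_def
  proof (intro conjI ballI allI)
    show "sets \<nu> = sets Dmeas" "finite_measure \<nu>" by (fact d')+
  next
    fix z assume z: "z \<in> space \<nu>"
    show "psd_mat {..<N} (\<lambda>i j. if i < N \<and> j < N then W z (N,i) (N,j) else 0)"
      unfolding psd_mat_def
    proof (intro conjI allI impI)
      fix i j :: nat assume "i \<notin> {..<N} \<or> j \<notin> {..<N}"
      then show "(if i < N \<and> j < N then W z (N,i) (N,j) else 0) = 0" by auto
    next
      fix x F assume F: "finite F \<and> F \<subseteq> {..<N}"
      have eq: "qf_fin (\<lambda>i j. if i < N \<and> j < N then W z (N,i) (N,j) else 0) x F =
            qf_fin (W z) (\<lambda>p. x (snd p)) (Pair N ` F)"
        unfolding qf_reindex using F by (intro qf_cong2) auto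
      have "Pair N ` F \<subseteq> Jsum" using F Pair_block[OF N] by auto
      then have "qf_fin (W z) (\<lambda>p. x (snd p)) (Pair N ` F) \<in> \<real> \<and> 0 \<le> Re (qf_fin (W z) (\<lambda>p. x (snd p)) (Pair N ` F))"
        using d'(3)[OF z] F unfolding psd_mat_def by blast
      then show "qf_fin (\<lambda>i j. if i < N \<and> j < N then W z (N,i) (N,j) else 0) x F \<in> \<real>"
        "0 \<le> Re (qf_fin (\<lambda>i j. if i < N \<and> j < N then W z (N,i) (N,j) else 0) x F)"
        unfolding eq by auto
    qed
  next
    fix i j
    show "integrable \<nu> (\<lambda>z. if i < N \<and> j < N then W z (N,i) (N,j) else 0)"
      using d'(4)[of "(N,i)" "(N,j)"] by (cases "i < N \<and> j < N") auto
  next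
    fix A i j assume A: "A \<in> sets Dmeas"
    show "\<mu> N A i j = (LINT z:A|\<nu>. if i < N \<and> j < N then W z (N,i) (N,j) else 0)"
    proof (cases "i < N \<and> j < N")
      case True
      then have "\<mu> N A i j = dsum_meas \<mu> A (N,i) (N,j)" using N by (simp add: dsum_meas_def Jsum_def)
      then show ?thesis using d'(5)[OF A] True by simp
    next
      case False
      then have "\<mu> N A i j = 0" using psdN[OF A] unfolding psd_mat_def by auto
      moreover have "(LINT z:A|\<nu>. if i < N \<and> j < N then W z (N,i) (N,j) else 0) = (LINT z:A|\<nu>. (0::complex))"
        using False by (intro arg_cong[where f="set_lebesgue_integral \<nu> A"]) auto
      ultimately show ?thesis by (simp add: set_lebesgue_integral_def)
    qed
  qed
qed

lemma opL2_block:
  fixes \<mu> :: "nat \<Rightarrow> complex set \<Rightarrow> nat \<Rightarrow> nat \<Rightarrow> complex"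
  assumes d: "opdensity Jsum (dsum_meas \<mu>) \<nu> W" and N: "N \<ge> 1" and om: "is_opmeasure {..<N} (\<mu> N)"
    and gm: "\<And>i. (\<lambda>w. g w i) \<in> borel_measurable Dmeas" and gz: "\<And>w i. i \<ge> N \<Longrightarrow> g w i = 0"
  shows "opL2 Jsum (dsum_meas \<mu>) (\<lambda>w p. if fst p = N \<and> snd p < N then g w (snd p) else 0) = opL2 {..<N} (\<mu> N) g"
proof -
  let ?G = "\<lambda>w p. if fst p = N \<and> snd p < N then g w (snd p) else 0"
  let ?WN = "\<lambda>z i j. if i < N \<and> j < N then W z (N,i) (N,j) else 0"
  have Gm: "(\<lambda>w. ?G w p) \<in> borel_measurable Dmeas" for p
    using gm by (cases "fst p = N \<and> snd p < N") auto
  have "opL2 Jsum (dsum_meas \<mu>) ?G = (\<integral>\<^sup>+z. ennreal (Re (qf_fin (W z) (?G z) (Pair N ` {..<N}))) \<partial>\<nu>)"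
    by (rule opL2_eq[OF d _ Pair_block[OF N] _ Gm]) auto
  also have "\<dots> = (\<integral>\<^sup>+z. ennreal (Re (qf_fin (?WN z) (g z) {..<N})) \<partial>\<nu>)"
  proof (intro nn_integral_cong arg_cong[where f="\<lambda>x. ennreal (Re x)"])
    fix z
    show "qf_fin (W z) (?G z) (Pair N ` {..<N}) = qf_fin (?WN z) (g z) {..<N}"
      unfolding qf_reindex by (intro qf_cong2) auto
  qed
  also have "\<dots> = opL2 {..<N} (\<mu> N) g"
    by (rule opL2_eq[OF block_density[OF d N om], symmetric]) (auto simp: gz gm not_less)
  finally show ?thesis .
qed



lemma ennreal_suminf_swap: "(\<Sum>i. \<Sum>j. f i j :: ennreal) = (\<Sum>j. \<Sum>i. f i j)"
proof -
  have "(\<Sum>j. \<Sum>i. f i j) = (\<Sum>j. \<integral>\<^sup>+i. f i j \<partial>count_space UNIV)"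
    by (simp add: nn_integral_count_space_nat)
  also have "\<dots> = (\<integral>\<^sup>+i. (\<Sum>j. f i j) \<partial>count_space UNIV)"
    by (rule nn_integral_suminf[symmetric]) simp
  also have "\<dots> = (\<Sum>i. \<Sum>j. f i j)" by (simp add: nn_integral_count_space_nat)
  finally show ?thesis ..
qed

lemma ennreal_const_sum_eq: assumes "(\<Sum>i::nat. c) = (c::ennreal)" "c \<noteq> \<infinity>" shows "c = 0"
proof -
  have "(\<Sum>i\<in>{0,1::nat}. c) \<le> (\<Sum>i. c)" by (intro sum_le_suminf) auto
  then have h: "2 * c \<le> c" using assms by simp
  have h2: "c + c \<le> c + 0" using h unfolding mult_2 by simp
  have "c \<le> 0" using ennreal_add_left_cancel_le[of c c 0] h2 assms(2) by blast
  then show ?thesis by simp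
qed

lemma scalar_density:
  fixes M :: "complex set \<Rightarrow> nat \<Rightarrow> nat \<Rightarrow> complex"
  assumes om: "is_opmeasure {..<1} M"
  shows "\<exists>\<nu> W. opdensity {..<1} M \<nu> W"
proof -
  have psd: "\<And>A. A \<in> sets Dmeas \<Longrightarrow> psd_mat {..<1} (M A)"
    using om unfolding is_opmeasure_def bounded_psd_def by auto
  have qf0: "\<And>W. qf_fin W (\<lambda>_. 1) {0} = W 0 0" by (simp add: qf_fin_def)
  define m where "m A = ennreal (Re (M A 0 0))" for A
  have "\<forall>x F. finite F \<and> F \<subseteq> {..<1} \<longrightarrow>
        countably_additive (sets Dmeas) (\<lambda>A. ennreal (Re (qf_fin (M A) x F)))"
    using om unfolding is_opmeasure_def by blast
  then have c0: "countably_additive (sets Dmeas) (\<lambda>A. ennreal (Re (qf_fin (M A) (\<lambda>_. 1) {0})))"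
    by auto
  then have ca: "countably_additive (sets Dmeas) m" unfolding m_def qf0 .
  have real: "M A 0 0 = complex_of_real (Re (M A 0 0)) \<and> 0 \<le> Re (M A 0 0)" if "A \<in> sets Dmeas" for A
  proof -
    have "qf_fin (M A) (\<lambda>_. 1) {0} \<in> \<real> \<and> 0 \<le> Re (qf_fin (M A) (\<lambda>_. 1) {0})"
      using psd[OF that] unfolding psd_mat_def by auto
    then show ?thesis unfolding qf0 by (auto simp: complex_is_Real_iff complex_eq_iff)
  qed
  have m0: "m {} = 0"
  proof (rule ennreal_const_sum_eq)
    have cA: "\<And>A. range A \<subseteq> sets Dmeas \<Longrightarrow> disjoint_family A \<Longrightarrow> \<Union>(range A) \<in> sets Dmeas \<Longrightarrow> (\<Sum>i. m (A i)) = m (\<Union>(range A))"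
      using ca unfolding countably_additive_def by blast
    have "(\<Sum>i. m ((\<lambda>_. {}) i)) = m (\<Union>(range (\<lambda>_::nat. {})))"
      by (rule cA) (auto simp: disjoint_family_on_def)
    then show "(\<Sum>i::nat. m {}) = m {}" by simp
    show "m {} \<noteq> \<infinity>" by (simp add: m_def)
  qed
  define \<nu> where "\<nu> = measure_of (space Dmeas) (sets Dmeas) m"
  have em: "\<And>A. A \<in> sets Dmeas \<Longrightarrow> emeasure \<nu> A = m A"
    unfolding \<nu>_def by (rule emeasure_measure_of_sigma[OF sets.sigma_algebra_axioms _ ca]) (simp add: positive_def m0)
  have s\<nu>: "sets \<nu> = sets Dmeas" unfolding \<nu>_def by (simp add: sets_measure_of[OF sets.space_closed])
  have sp\<nu>: "space \<nu> = space Dmeas" unfolding \<nu>_def by (simp add: space_measure_of[OF sets.space_closed])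
  have fin: "finite_measure \<nu>"
    by (rule finite_measureI) (simp add: sp\<nu> em m_def)
  define W where "W z i j = (if i = 0 \<and> j = 0 then (1::complex) else 0)" for z :: complex and i j :: nat
  have "opdensity {..<1} M \<nu> W"
    unfolding opdensity_def
  proof (intro conjI ballI allI)
    show "sets \<nu> = sets Dmeas" by (fact s\<nu>)
    show "finite_measure \<nu>" by (fact fin)
  next
    fix z
    show "psd_mat {..<1} (W z)" unfolding psd_mat_def
    proof (intro conjI allI impI)
      fix i j :: nat assume "i \<notin> {..<1} \<or> j \<notin> {..<1}" then show "W z i j = 0" by (auto simp: W_def)
    next
      fix x F assume F: "finite F \<and> F \<subseteq> {..<(1::nat)}"
      then have "F = {} \<or> F = {0}" by auto
      moreover have "qf_fin (W z) x {0} = complex_of_real ((cmod (x 0))\<^sup>2)"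
        using complex_norm_square[of "x 0"] by (simp add: qf_fin_def W_def mult.commute)
      ultimately have "qf_fin (W z) x F = 0 \<or> qf_fin (W z) x F = complex_of_real ((cmod (x 0))\<^sup>2)"
        by (auto simp: qf_fin_def)
      then show "qf_fin (W z) x F \<in> \<real>" "0 \<le> Re (qf_fin (W z) x F)" by auto
    qed
  next
    fix i j
    show "integrable \<nu> (\<lambda>z. W z i j)"
    proof -
      have "integrable \<nu> (\<lambda>z. (1::complex))" by (rule finite_measure.integrable_const[OF fin])
      then show ?thesis by (cases "i = 0 \<and> j = 0") (auto simp: W_def)
    qed
  next
    fix A i j assume A: "A \<in> sets Dmeas"
    show "M A i j = (LINT z:A|\<nu>. W z i j)"
    proof (cases "i = 0 \<and> j = 0")
      case True
      have "(LINT z:A|\<nu>. W z i j) = (LINT z:A|\<nu>. (1::complex))" using True by (simp add: W_def)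
      also have "\<dots> = measure \<nu> A *\<^sub>R 1"
        using A s\<nu> em by (intro set_integral_const) (auto simp: m_def)
      also have "measure \<nu> A = Re (M A 0 0)"
        using em[OF A] real[OF A] by (simp add: measure_def m_def)
      finally show ?thesis using True real[OF A] by (simp add: scaleR_conv_of_real)
    next
      case False
      then have "M A i j = 0" using psd[OF A] unfolding psd_mat_def by auto
      moreover have "(LINT z:A|\<nu>. W z i j) = (LINT z:A|\<nu>. (0::complex))"
        using False by (auto simp: W_def)
      ultimately show ?thesis by (simp add: set_lebesgue_integral_def)
    qed
  qed
  then show ?thesis by blast
qed

lemma dsum_density:
  fixes \<mu> :: "nat \<Rightarrow> complex set \<Rightarrow> nat \<Rightarrow> nat \<Rightarrow> complex"
  assumes ex: "\<And>N. N \<ge> 1 \<Longrightarrow> \<exists>\<nu> W. opdensity {..<N} (\<mu> N) \<nu> W"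
  shows "\<exists>\<nu> W. opdensity Jsum (dsum_meas \<mu>) \<nu> W"
proof -
  have "\<forall>N. \<exists>p. N \<ge> 1 \<longrightarrow> opdensity {..<N} (\<mu> N) (fst p) (snd p)"
    using ex by fastforce
  then obtain h where h: "\<And>N. N \<ge> 1 \<Longrightarrow> opdensity {..<N} (\<mu> N) (fst (h N)) (snd (h N))"
    by metis
  define \<nu>s where "\<nu>s N = fst (h N)" for N
  define Ws where "Ws N = snd (h N)" for N
  have d: "\<And>N. N \<ge> 1 \<Longrightarrow> opdensity {..<N} (\<mu> N) (\<nu>s N) (Ws N)"
    using h unfolding \<nu>s_def Ws_def by blast
  have sN: "\<And>N. N \<ge> 1 \<Longrightarrow> sets (\<nu>s N) = sets Dmeas" using d unfolding opdensity_def by blast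
  have spN: "\<And>N. N \<ge> 1 \<Longrightarrow> space (\<nu>s N) = space Dmeas" using sN sets_eq_imp_space_eq by blast
  have fN: "\<And>N. N \<ge> 1 \<Longrightarrow> finite_measure (\<nu>s N)" using d unfolding opdensity_def by blast
  define a where "a N = (if N \<ge> 1 then (1/2)^N / (1 + measure (\<nu>s N) (space Dmeas)) else 0)" for N :: nat
  have a_nn: "\<And>N. 0 \<le> a N" unfolding a_def by (simp add: add_nonneg_pos)
  have a_pos: "\<And>N. N \<ge> 1 \<Longrightarrow> 0 < a N" unfolding a_def
    by (auto intro!: divide_pos_pos add_pos_nonneg)
  define m where "m A = (\<Sum>N. ennreal (a N) * emeasure (\<nu>s N) A)" for A
  have ca: "countably_additive (sets Dmeas) m"
    unfolding countably_additive_def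
  proof (intro allI impI)
    fix A :: "nat \<Rightarrow> complex set" assume A: "range A \<subseteq> sets Dmeas" "disjoint_family A" "\<Union>(range A) \<in> sets Dmeas"
    have trm: "(\<Sum>i. ennreal (a N) * emeasure (\<nu>s N) (A i)) = ennreal (a N) * emeasure (\<nu>s N) (\<Union>(range A))" for N
    proof (cases "N \<ge> 1")
      case True
      then show ?thesis using A sN[OF True] by (simp add: suminf_emeasure)
    next
      case False then show ?thesis by (simp add: a_def)
    qed
    have "(\<Sum>i. m (A i)) = (\<Sum>N. \<Sum>i. ennreal (a N) * emeasure (\<nu>s N) (A i))"
      unfolding m_def by (rule ennreal_suminf_swap)
    also have "\<dots> = m (\<Union>(range A))" unfolding m_def trm ..
    finally show "(\<Sum>i. m (A i)) = m (\<Union>(range A))" .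
  qed
  have m0: "m {} = 0" unfolding m_def by simp
  define L where "L = measure_of (space Dmeas) (sets Dmeas) m"
  have em: "\<And>A. A \<in> sets Dmeas \<Longrightarrow> emeasure L A = m A"
    unfolding L_def by (rule emeasure_measure_of_sigma[OF sets.sigma_algebra_axioms _ ca]) (simp add: positive_def m0)
  have sL: "sets L = sets Dmeas" unfolding L_def by (simp add: sets_measure_of[OF sets.space_closed])
  have spL: "space L = space Dmeas" unfolding L_def by (simp add: space_measure_of[OF sets.space_closed])
  have finL: "finite_measure L"
  proof
    have le: "ennreal (a N) * emeasure (\<nu>s N) (space Dmeas) \<le> ennreal ((1/2)^N)" for N
    proof (cases "N \<ge> 1")
      case True
      let ?c = "measure (\<nu>s N) (space Dmeas)"
      have "emeasure (\<nu>s N) (space Dmeas) = ennreal ?c"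
        using finite_measure.emeasure_eq_measure[OF fN[OF True]] by simp
      moreover have "a N * ?c \<le> (1/2)^N"
      proof -
        have c0: "0 \<le> ?c" by simp
        have pos: "0 < 1 + ?c" using c0 by linarith
        then have q: "?c / (1 + ?c) \<le> 1" by (simp add: divide_le_eq)
        have "a N * ?c = (1/2)^N * (?c / (1 + ?c))" using True by (simp add: a_def)
        also have "\<dots> \<le> (1/2)^N * 1" by (intro mult_left_mono q) auto
        finally show ?thesis by simp
      qed
      ultimately show ?thesis using a_nn[of N] by (simp add: ennreal_mult[symmetric])
    next
      case False then show ?thesis by (simp add: a_def)
    qed
    have "emeasure L (space L) = m (space Dmeas)" using spL em by simp
    also have "\<dots> \<le> (\<Sum>N. ennreal ((1/2)^N))" unfolding m_def by (intro suminf_le le) auto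
    also have "\<dots> = ennreal (\<Sum>N. (1/2)^N)" by (intro suminf_ennreal2) auto
    also have "\<dots> < \<infinity>" by simp
    finally show "emeasure L (space L) \<noteq> \<infinity>" by simp
  qed
  have ac: "absolutely_continuous L (\<nu>s N)" if N: "N \<ge> 1" for N
    unfolding absolutely_continuous_def
  proof
    fix X assume "X \<in> null_sets L"
    then have X: "X \<in> sets Dmeas" "m X = 0" using sL em by (auto simp: null_sets_def)
    have "ennreal (a N) * emeasure (\<nu>s N) X \<le> m X"
      unfolding m_def using sum_le_suminf[of "\<lambda>N. ennreal (a N) * emeasure (\<nu>s N) X" "{N}"] by auto
    then have "ennreal (a N) * emeasure (\<nu>s N) X = 0" using X by simp
    then have "emeasure (\<nu>s N) X = 0" using a_pos[OF N] by simp
    then show "X \<in> null_sets (\<nu>s N)" using X sN[OF N] by (auto simp: null_sets_def)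
  qed
  have "\<forall>N. \<exists>D. N \<ge> 1 \<longrightarrow> (D \<in> borel_measurable L \<and> (\<forall>x. 0 \<le> D x) \<and> \<nu>s N = density L (\<lambda>x. ennreal (D x)))"
  proof
    fix N show "\<exists>D. N \<ge> 1 \<longrightarrow> (D \<in> borel_measurable L \<and> (\<forall>x. 0 \<le> D x) \<and> \<nu>s N = density L (\<lambda>x. ennreal (D x)))"
    proof (cases "N \<ge> 1")
      case True
      obtain D where "D \<in> borel_measurable L" "\<And>x. 0 \<le> D x" "\<nu>s N = density L (\<lambda>x. ennreal (D x))"
        using dens_rep[OF finL fN[OF True] _ ac[OF True]] sN[OF True] sL by metis
      then show ?thesis by blast
    qed auto
  qed
  then obtain D where D: "\<And>N. N \<ge> 1 \<Longrightarrow> D N \<in> borel_measurable L"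
    "\<And>N x. N \<ge> 1 \<Longrightarrow> 0 \<le> D N x" "\<And>N. N \<ge> 1 \<Longrightarrow> \<nu>s N = density L (\<lambda>x. ennreal (D N x))"
    by metis
  define W where "W z = dsum_meas (\<lambda>N _ i j. complex_of_real (D N z) * Ws N z i j) {}" for z
  have mc: "\<And>N. N \<ge> 1 \<Longrightarrow> measurable (\<nu>s N) borel = measurable L borel"
    using sN sL by (intro measurable_cong_sets) auto
  have Wsm: "\<And>N i j. N \<ge> 1 \<Longrightarrow> (\<lambda>z. Ws N z i j) \<in> borel_measurable L"
    using d mc unfolding opdensity_def by (metis borel_measurable_integrable)
  have "opdensity Jsum (dsum_meas \<mu>) L W"
    unfolding opdensity_def
  proof (intro conjI ballI allI)
    show "sets L = sets Dmeas" by (fact sL)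
    show "finite_measure L" by (fact finL)
  next
    fix z assume z: "z \<in> space L"
    show "psd_mat Jsum (W z)" unfolding psd_mat_def
    proof (intro conjI allI impI)
      fix p q assume "p \<notin> Jsum \<or> q \<notin> Jsum" then show "W z p q = 0" by (auto simp: W_def dsum_meas_def)
    next
      fix x F assume F: "finite F \<and> F \<subseteq> Jsum"
      have blk: "\<And>N. N \<in> fst ` F \<Longrightarrow> N \<ge> 1 \<and> {i. (N, i) \<in> F} \<subseteq> {..<N} \<and> finite {i. (N, i) \<in> F}"
        using F finite_G[of F] by (force simp: Jsum_def)
      have eq: "qf_fin (W z) x F = (\<Sum>N\<in>fst ` F. complex_of_real (D N z) * qf_fin (Ws N z) (\<lambda>i. x (N, i)) {i. (N, i) \<in> F})"
        unfolding W_def using F by (simp add: qf_dsum qf_scale)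
      have each: "qf_fin (Ws N z) (\<lambda>i. x (N, i)) {i. (N, i) \<in> F} \<in> \<real> \<and> 0 \<le> Re (qf_fin (Ws N z) (\<lambda>i. x (N, i)) {i. (N, i) \<in> F})"
        if N: "N \<in> fst ` F" for N
      proof -
        have "psd_mat {..<N} (Ws N z)" using d blk[OF N] z spL spN unfolding opdensity_def by auto
        then show ?thesis using blk[OF N] unfolding psd_mat_def by blast
      qed
      show "qf_fin (W z) x F \<in> \<real>" unfolding eq
        using each blk by (intro sum_in_Reals) (auto intro: Reals_mult)
      show "0 \<le> Re (qf_fin (W z) x F)" unfolding eq Re_sum
        using each blk D(2) by (intro sum_nonneg) auto
    qed
  next
    fix p q
    show "integrable L (\<lambda>z. W z p q)"
    proof (cases "p \<in> Jsum \<and> q \<in> Jsum \<and> fst p = fst q")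
      case True
      then have N: "fst p \<ge> 1" by (auto simp: Jsum_def)
      have "integrable (\<nu>s (fst p)) (\<lambda>z. Ws (fst p) z (snd p) (snd q))"
        using d[OF N] unfolding opdensity_def by blast
      then have "integrable L (\<lambda>z. D (fst p) z *\<^sub>R Ws (fst p) z (snd p) (snd q))"
        unfolding D(3)[OF N] by (subst (asm) integrable_density) (auto intro: D N Wsm)
      then show ?thesis using True by (simp add: W_def dsum_meas_def scaleR_conv_of_real)
    next
      case False
      then have "(\<lambda>z. W z p q) = (\<lambda>z. 0)" by (auto simp: W_def dsum_meas_def)
      then show ?thesis by simp
    qed
  next
    fix A p q assume A: "A \<in> sets Dmeas"
    show "dsum_meas \<mu> A p q = (LINT z:A|L. W z p q)"
    proof (cases "p \<in> Jsum \<and> q \<in> Jsum \<and> fst p = fst q")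
      case True
      then have N: "fst p \<ge> 1" by (auto simp: Jsum_def)
      have "dsum_meas \<mu> A p q = \<mu> (fst p) A (snd p) (snd q)" using True by (simp add: dsum_meas_def)
      also have "\<dots> = (LINT z:A|\<nu>s (fst p). Ws (fst p) z (snd p) (snd q))"
        using d[OF N] A unfolding opdensity_def by blast
      also have "\<dots> = (LINT z:A|L. D (fst p) z *\<^sub>R Ws (fst p) z (snd p) (snd q))"
        unfolding D(3)[OF N] using A sL by (intro set_integral_density_real) (auto intro: D N Wsm)
      also have "\<dots> = (LINT z:A|L. W z p q)"
        using True by (simp add: W_def dsum_meas_def scaleR_conv_of_real)
      finally show ?thesis .
    next
      case False
      then have "(\<lambda>z. W z p q) = (\<lambda>z. 0)" "dsum_meas \<mu> A p q = 0" by (auto simp: W_def dsum_meas_def)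
      then show ?thesis by (simp add: set_lebesgue_integral_def)
    qed
  qed
  then show ?thesis by blast
qed



lemma Arg_meas[measurable]: "Arg \<in> borel_measurable borel"
proof -
  have h: "(\<lambda>z. if z \<in> - \<real>\<^sub>\<le>\<^sub>0 then Arg z else pi) \<in> borel_measurable borel"
    by (rule borel_measurable_continuous_on_if)
       (auto intro: continuous_on_Arg continuous_on_const borel_open)
  have "Arg = (\<lambda>z. if z = 0 then 0 else (if z \<in> - \<real>\<^sub>\<le>\<^sub>0 then Arg z else pi))"
  proof
    fix z :: complex
    show "Arg z = (if z = 0 then 0 else (if z \<in> - \<real>\<^sub>\<le>\<^sub>0 then Arg z else pi))"
    proof (cases "z = 0")
      case True then show ?thesis by (simp add: Arg_zero)
    next
      case False
      then show ?thesis
        by (auto simp: complex_nonpos_Reals_iff Arg_eq_pi complex_eq_iff)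
    qed
  qed
  also have "\<dots> \<in> borel_measurable borel"
    using h by measurable
  finally show ?thesis .
qed

lemma Pext_meas:
  assumes f: "(\<lambda>t. f t j) \<in> borel_measurable (restrict_space lborel {0..1})"
  shows "(\<lambda>w. Pext f w j) \<in> borel_measurable Dmeas"
proof -
  have g[measurable]: "(\<lambda>t. indicator {0..1} t *\<^sub>R f t j) \<in> borel_measurable lborel"
    using f by (subst borel_measurable_restrict_space_iff[symmetric]) auto
  have eq: "(\<lambda>w. Pext f w j) = (\<lambda>w. \<integral>t. complex_of_real (Pker (cmod w) (Arg w / (2 * pi) - t)) *
         (indicator {0..1} t *\<^sub>R f t j) \<partial>lborel)"
    unfolding Pext_def set_lebesgue_integral_def
    by (intro ext Bochner_Integration.integral_cong) (auto simp: indicator_def)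
  have m1: "(\<lambda>(w, t). complex_of_real (Pker (cmod w) (Arg w / (2 * pi) - t)) *
         (indicator {0..1} t *\<^sub>R f t j)) \<in> borel_measurable (borel \<Otimes>\<^sub>M lborel)"
    unfolding Pker_def by measurable
  have "(\<lambda>(w, t). complex_of_real (Pker (cmod w) (Arg w / (2 * pi) - t)) *
         (indicator {0..1} t *\<^sub>R f t j)) \<in> borel_measurable (Dmeas \<Otimes>\<^sub>M lborel)"
  proof (rule measurable_compose[OF _ m1])
    have a: "(\<lambda>x. x) \<in> measurable Dmeas borel"
      unfolding Dmeas_def by (rule measurable_restrict_space1) simp
    have b: "(\<lambda>x. fst x) \<in> measurable (Dmeas \<Otimes>\<^sub>M lborel) borel"
      by (rule measurable_compose[OF measurable_fst a])
    have c: "(\<lambda>x. snd x) \<in> measurable (Dmeas \<Otimes>\<^sub>M lborel) lborel"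
      by (rule measurable_snd)
    show "(\<lambda>x. x) \<in> measurable (Dmeas \<Otimes>\<^sub>M lborel) (borel \<Otimes>\<^sub>M lborel)"
      using b c by (subst measurable_pair_iff) (simp add: comp_def)
  qed
  note mm = this
  show ?thesis unfolding eq
    by (rule lborel.borel_measurable_lebesgue_integral) (rule mm)
qed



lemma H2_zero: "H2 J (\<lambda>t j. 0)"
  unfolding H2_def by simp

lemma H2normsq_zero: "H2normsq J (\<lambda>t j. 0) = 0"
  unfolding H2normsq_def by simp

lemma H2_embed:
  fixes f :: "real \<Rightarrow> nat \<Rightarrow> complex"
  assumes N: "N \<ge> 1" and f: "H2 {..<N} f"
  defines "F \<equiv> (\<lambda>t p. if fst p = N \<and> snd p < N then f t (snd p) else 0)"
  shows "H2 Jsum F" "H2normsq Jsum F = H2normsq {..<N} f"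
proof -
  have f1: "\<And>j. (\<lambda>t. f t j) \<in> borel_measurable (restrict_space lborel {0..1})"
    and f2: "\<And>t j. j \<notin> {..<N} \<Longrightarrow> f t j = 0"
    and f3: "(\<integral>\<^sup>+ t. (\<Sum>\<^sub>\<infinity>j\<in>{..<N}. ennreal ((cmod (f t j))\<^sup>2)) \<partial>(restrict_space lborel {0..1})) < \<infinity>"
    and f4: "\<And>n j. n < (0::int) \<Longrightarrow> (LINT t:{0..1}|lborel. f t j * exp (- 2 * pi * \<i> * of_int n * of_real t)) = 0"
    using f unfolding H2_def by auto
  have sumeq: "(\<Sum>\<^sub>\<infinity>p\<in>Jsum. ennreal ((cmod (F t p))\<^sup>2)) = (\<Sum>\<^sub>\<infinity>j\<in>{..<N}. ennreal ((cmod (f t j))\<^sup>2))" for t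
  proof -
    have "(\<Sum>\<^sub>\<infinity>p\<in>Jsum. ennreal ((cmod (F t p))\<^sup>2)) = (\<Sum>\<^sub>\<infinity>p\<in>Pair N ` {..<N}. ennreal ((cmod (F t p))\<^sup>2))"
      using Pair_block[OF N] by (intro infsum_cong_neutral) (auto simp: F_def)
    also have "\<dots> = (\<Sum>\<^sub>\<infinity>j\<in>{..<N}. ennreal ((cmod (F t (N, j)))\<^sup>2))"
      by (subst infsum_reindex) (auto simp: inj_on_def comp_def)
    also have "\<dots> = (\<Sum>\<^sub>\<infinity>j\<in>{..<N}. ennreal ((cmod (f t j))\<^sup>2))"
      by (intro infsum_cong) (auto simp: F_def)
    finally show ?thesis .
  qed
  show "H2normsq Jsum F = H2normsq {..<N} f" unfolding H2normsq_def sumeq ..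
  show "H2 Jsum F" unfolding H2_def
  proof (intro conjI allI impI)
    fix j :: "nat \<times> nat"
    show "(\<lambda>t. F t j) \<in> borel_measurable (restrict_space lborel {0..1})"
      using f1 by (cases "fst j = N \<and> snd j < N") (auto simp: F_def)
  next
    fix t and j :: "nat \<times> nat" assume "j \<notin> Jsum"
    then show "F t j = 0" using N by (auto simp: F_def Jsum_def split: prod.splits)
  next
    show "(\<integral>\<^sup>+ t. (\<Sum>\<^sub>\<infinity>j\<in>Jsum. ennreal ((cmod (F t j))\<^sup>2)) \<partial>(restrict_space lborel {0..1})) < \<infinity>"
      unfolding sumeq by (fact f3)
  next
    fix n :: int and j :: "nat \<times> nat" assume n: "n < 0"
    show "(LINT t:{0..1}|lborel. F t j * exp (- 2 * pi * \<i> * of_int n * of_real t)) = 0"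
      using f4[OF n, of "snd j"] by (cases "fst j = N \<and> snd j < N") (auto simp: F_def)
  qed
qed

lemma Pext_embed:
  "Pext (\<lambda>t p. if fst p = N \<and> snd p < N then f t (snd p) else 0) =
   (\<lambda>w p. if fst p = N \<and> snd p < N then Pext f w (snd p) else 0)"
  by (intro ext) (auto simp: Pext_def)

lemma Pext_zero: "(\<And>t. f t i = 0) \<Longrightarrow> Pext f w i = 0"
  by (simp add: Pext_def)

lemma exists_N:
  fixes c K :: real
  assumes c: "c > 0" and K: "K \<ge> 0"
  shows "\<exists>N::nat. N \<ge> 1 \<and> K < c * sqrt (ln (real N))"
proof -
  obtain n :: nat where n: "exp ((K/c)\<^sup>2 + 1) < real n" using reals_Archimedean2 by blast
  have "1 < exp ((K/c)\<^sup>2 + 1)" by (simp add: add_nonneg_pos)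
  then have n1: "1 < real n" using n by linarith
  have "ln (exp ((K/c)\<^sup>2 + 1)) < ln (real n)" using n n1 by (subst ln_less_cancel_iff) auto
  then have "(K/c)\<^sup>2 + 1 < ln (real n)" by simp
  then have "sqrt ((K/c)\<^sup>2) < sqrt (ln (real n))" by (intro real_sqrt_less_mono) linarith
  then have "K/c < sqrt (ln (real n))" using K c by simp
  then have "K < c * sqrt (ln (real n))" using c by (simp add: divide_less_eq mult.commute)
  then show ?thesis using n1 by (intro exI[of _ n]) auto
qed

theorem corollary4:
  fixes c :: real and \<mu> :: "nat \<Rightarrow> complex set \<Rightarrow> nat \<Rightarrow> nat \<Rightarrow> complex"
  assumes "c > 0"
    and "\<And>N. N \<ge> 1 \<Longrightarrow> is_opmeasure {..<N} (\<mu> N)"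
    and "\<And>N. N \<ge> 1 \<Longrightarrow> Inorm {..<N} (\<mu> N) = 1"
    and "\<And>N K. N \<ge> 1 \<Longrightarrow> 0 \<le> K \<Longrightarrow> K < c * sqrt (ln (real N)) \<Longrightarrow>
           \<not> (\<forall>f. H2 {..<N} f \<longrightarrow>
                  opL2 {..<N} (\<mu> N) (Pext f) \<le> ennreal (K\<^sup>2) * H2normsq {..<N} f)"
  shows "Inorm Jsum (dsum_meas \<mu>) = 1 \<and>
         \<not> (\<exists>C::real. \<forall>f. H2 Jsum f \<longrightarrow>
                opL2 Jsum (dsum_meas \<mu>) (Pext f) \<le> ennreal C * H2normsq Jsum f)"
proof
  show "Inorm Jsum (dsum_meas \<mu>) = 1" using assms(3) by (rule part1)
  show "\<not> (\<exists>C::real. \<forall>f. H2 Jsum f \<longrightarrow>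
                opL2 Jsum (dsum_meas \<mu>) (Pext f) \<le> ennreal C * H2normsq Jsum f)"
  proof
    assume "\<exists>C::real. \<forall>f. H2 Jsum f \<longrightarrow> opL2 Jsum (dsum_meas \<mu>) (Pext f) \<le> ennreal C * H2normsq Jsum f"
    then obtain C :: real where bnd: "\<And>f. H2 Jsum f \<Longrightarrow> opL2 Jsum (dsum_meas \<mu>) (Pext f) \<le> ennreal C * H2normsq Jsum f"
      by blast
    show False
    proof (cases "\<exists>\<nu> W. opdensity Jsum (dsum_meas \<mu>) \<nu> W")
      case True
      then obtain \<nu> W where d: "opdensity Jsum (dsum_meas \<mu>) \<nu> W" by blast
      define K where "K = sqrt (max C 0) + 1"
      have K0: "0 \<le> K" unfolding K_def by simp
      have CK: "C \<le> K\<^sup>2"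
      proof -
        have "C \<le> max C 0" by simp
        also have "\<dots> = (sqrt (max C 0))\<^sup>2" by simp
        also have "\<dots> \<le> K\<^sup>2" unfolding K_def by (intro power_mono) auto
        finally show ?thesis .
      qed
      obtain N :: nat where N: "N \<ge> 1" "K < c * sqrt (ln (real N))" using exists_N[OF assms(1) K0] by blast
      obtain f where fH: "H2 {..<N} f" and fb: "\<not> opL2 {..<N} (\<mu> N) (Pext f) \<le> ennreal (K\<^sup>2) * H2normsq {..<N} f"
        using assms(4)[OF N(1) K0 N(2)] by blast
      define F where "F = (\<lambda>t p. if fst p = N \<and> snd p < N then f t (snd p) else 0)"
      have FH: "H2 Jsum F" and Fn: "H2normsq Jsum F = H2normsq {..<N} f"
        using H2_embed[OF N(1) fH] unfolding F_def by auto
      have fm: "\<And>i. (\<lambda>t. f t i) \<in> borel_measurable (restrict_space lborel {0..1})"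
        and fz: "\<And>t i. i \<notin> {..<N} \<Longrightarrow> f t i = 0" using fH unfolding H2_def by auto
      have "opL2 Jsum (dsum_meas \<mu>) (Pext F) = opL2 {..<N} (\<mu> N) (Pext f)"
        unfolding F_def Pext_embed
      proof (rule opL2_block[OF d N(1) assms(2)[OF N(1)]])
        fix i show "(\<lambda>w. Pext f w i) \<in> borel_measurable Dmeas" by (rule Pext_meas[OF fm])
      next
        fix w and i :: nat assume "N \<le> i"
        then show "Pext f w i = 0" by (intro Pext_zero fz) simp
      qed
      then have "opL2 {..<N} (\<mu> N) (Pext f) \<le> ennreal C * H2normsq {..<N} f"
        using bnd[OF FH] Fn by simp
      also have "\<dots> \<le> ennreal (K\<^sup>2) * H2normsq {..<N} f"
        using CK by (intro mult_right_mono ennreal_leI) auto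
      finally show False using fb by simp
    next
      case False
      have U: "\<And>g. opL2 Jsum (dsum_meas \<mu>) g = (THE q::ennreal. True)"
        using opL2_nodens False by blast
      have "(THE q::ennreal. True) \<le> ennreal C * H2normsq Jsum (\<lambda>t j. 0)"
        using bnd[OF H2_zero] U by simp
      then have U0: "(THE q::ennreal. True) = 0" by (simp add: H2normsq_zero)
      have "\<exists>\<nu> W. opdensity {..<N} (\<mu> N) \<nu> W" if N: "N \<ge> 1" for N
      proof (rule ccontr)
        assume nd: "\<not> (\<exists>\<nu> W. opdensity {..<N} (\<mu> N) \<nu> W)"
        show False
        proof (cases "N = 1")
          case True
          then show False using scalar_density[OF assms(2)[of 1]] nd by simp
        next
          case False
          then have N2: "N \<ge> 2" using N by simp
          have "0 < ln (real N)" using N2 by simp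
          then have "(0::real) < c * sqrt (ln (real N))" using assms(1) by simp
          from assms(4)[OF N order_refl this] obtain f where
            "\<not> opL2 {..<N} (\<mu> N) (Pext f) \<le> ennreal (0\<^sup>2) * H2normsq {..<N} f" by blast
          then show False using opL2_nodens[OF nd] U0 by simp
        qed
      qed
      then show False using dsum_density False by blast
    qed
  qed
qed


end
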